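(* There is an absolute constant $C>0$ such that the following holds. Let $Q(z)=\sum_{j=0}^n b_jz^j$ be a polynomial with complex coefficients such that $|b_0|=1$ and $|b_j|\le M$ for all $j$. Let $0<\nu_1\le1$, and let $A$ be the arc of the circle $\partial D_{\nu_1}(1-\nu_1)$ (center $1-\nu_1$, radius $\nu_1$) with central angle $0<\theta<\pi$ that is symmetric with respect to the real axis and passes through the point $1$. Then there is some $w\in A$ such that $$|Q(w)|\ge(2M)^{-C/(\nu_1\theta)}.$$
   Context: Note $M\ge|b_0|=1$. *)

theory Defs
  imports "HOL-Analysis.Analysis" "HOL-Computational_Algebra.Polynomial"
begin

definition circ_arc :: "real \<Rightarrow> real \<Rightarrow> complex set" where
  "circ_arc nu theta =
     {complex_of_real (1 - nu) + complex_of_real nu * cis t | t. -theta/2 \<le> t \<and> t \<le> theta/2}"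

end

theory Submission
  imports Defs "HOL-Complex_Analysis.Complex_Analysis"
begin

lemma PX: "cnj (cis a) * (u - cis a) * (cnj u - cis a) =
  Complex ((Re u ^ 2 + Im u ^ 2 + 1) * cos a - 2 * Re u) (sin a * (1 - Re u ^ 2 - Im u ^ 2))"
proof -
  have sc: "sin a * sin a + cos a * cos a = 1" by (metis sin_cos_squared_add power2_eq_square)
  have 1: "Re u * (cos a * cos a) + Re u * (sin a * sin a) = Re u"
    by (metis sc distrib_left mult.right_neutral add.commute)
  have 2: "Im u * (cos a * cos a) + Im u * (sin a * sin a) = Im u"
    by (metis sc distrib_left mult.right_neutral add.commute)
  show ?thesis
    by (simp add: complex_eq_iff cis.sel algebra_simps power2_eq_square 1 2)
qed

lemma normP: "cmod (cnj (cis a) * (u - cis a) * (cnj u - cis a)) = cmod ((u - cis a) * (u - cnj (cis a)))"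
proof -
  have "cmod (cnj u - cis a) = cmod (u - cnj (cis a))"
    by (metis complex_cnj_cnj complex_cnj_diff complex_mod_cnj)
  then show ?thesis by (simp add: norm_mult)
qed

lemma wP: assumes "u \<noteq> cnj (cis a)"
  shows "cnj (cis a) * (u - cis a) / (u - cnj (cis a)) * cnj e
     = cnj (cis a) * (u - cis a) * (cnj u - cis a) * cnj e / of_real ((cmod (u - cnj (cis a)))^2)"
proof -
  have "(u - cis a) / (u - cnj (cis a)) = (u - cis a) * cnj (u - cnj (cis a)) / of_real ((cmod (u - cnj (cis a)))^2)"
    by (rule complex_div_cnj)
  also have "cnj (u - cnj (cis a)) = cnj u - cis a" by simp
  finally have h: "(u - cis a) / (u - cnj (cis a)) = (u - cis a) * (cnj u - cis a) / of_real ((cmod (u - cnj (cis a)))^2)" .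
  have "cnj (cis a) * (u - cis a) / (u - cnj (cis a)) * cnj e = cnj (cis a) * ((u - cis a) / (u - cnj (cis a))) * cnj e"
    by simp
  also have "\<dots> = cnj (cis a) * ((u - cis a) * (cnj u - cis a) / of_real ((cmod (u - cnj (cis a)))^2)) * cnj e"
    by (simp only: h)
  finally show ?thesis by simp
qed

lemma sin_Im_Ln: assumes "z \<noteq> 0" shows "sin (Im (Ln z)) = Im z / cmod z"
proof -
  have "Im z = Im (exp (Ln z))" using assms by simp
  also have "\<dots> = exp (Re (Ln z)) * sin (Im (Ln z))" by (rule Im_exp)
  also have "exp (Re (Ln z)) = cmod z" using assms by simp
  finally show ?thesis using assms by (simp add: field_simps)
qed

lemma Im_Ln_ge: assumes "0 < Im z" shows "Im z / cmod z \<le> Im (Ln z)"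
proof -
  have z: "z \<noteq> 0" using assms by auto
  have "0 \<le> Im (Ln z)" using Im_Ln_pos_lt_imp[OF assms] by simp
  then have "sin (Im (Ln z)) \<le> Im (Ln z)" by (rule sin_x_le_x)
  then show ?thesis using sin_Im_Ln[OF z] by simp
qed

lemma core:
  fixes f :: "complex \<Rightarrow> complex" and a K m \<mu> :: real and u0 :: complex
  assumes holf: "f holomorphic_on UNIV"
    and a: "0 < a" "a < pi"
    and Kb: "\<And>u. cmod u < 1 \<Longrightarrow> cmod (f u) * (1 - cmod u) \<le> K"
    and mb: "\<And>u. cmod u = 1 \<Longrightarrow> cos a \<le> Re u \<Longrightarrow> cmod (f u) \<le> m"
    and u0: "cmod u0 \<le> 1/2" and mu: "0 \<le> \<mu>"
  shows "cmod (f u0) / 4 * exp (\<mu> * (sin a / 16)) \<le> max (4 * m * exp (\<mu> * pi)) (18 * K)"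
proof -
  define p where "p = cis a"
  define q where "q = cnj p"
  define s where "s = sin a / 8"
  define cg where "cg = sqrt (1 - s^2)"
  define e where "e = Complex cg s"
  define w where "w u = cnj p * (u - p) / (u - q)" for u
  define P where "P u = cnj p * (u - p) * (cnj u - p) * cnj e" for u
  define L where "L u = Ln (w u * cnj e)" for u
  define F where "F u = f u * ((u - p) * (u - q)) * exp (- (\<i> * of_real \<mu>) * L u)" for u
  define G where "G u = (if u = p \<or> u = q then 0 else F u)" for u
  define S where "S = {u. cmod u < 1 \<and> 0 < Im (P u)}"
  define B where "B = max (4 * m * exp (\<mu> * pi)) (18 * K)"
  define X where "X u = (Re u ^ 2 + Im u ^ 2 + 1) * cos a - 2 * Re u" for u
  define Y where "Y u = sin a * (1 - Re u ^ 2 - Im u ^ 2)" for u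
  have sa: "0 < sin a" using sin_gt_zero a by blast
  have sa1: "sin a \<le> 1" by simp
  have s0: "0 < s" "s \<le> 1/8" using sa sa1 by (auto simp: s_def)
  have cgs: "cg^2 + s^2 = 1"
  proof -
    have "s^2 \<le> 1" using s0 by (simp add: power_le_one)
    then show ?thesis by (simp add: cg_def)
  qed
  have cg1: "99/100 \<le> cg"
  proof -
    have "s^2 \<le> (1/8)^2" using s0 by (intro power_mono) auto
    then have "(99/100)^2 \<le> 1 - s^2" by (simp add: power2_eq_square)
    then have "sqrt ((99/100)^2) \<le> sqrt (1 - s^2)" by (rule real_sqrt_le_mono)
    then show ?thesis by (simp add: cg_def)
  qed
  have cgle: "cg \<le> 1"
  proof -
    have "sqrt (1 - s^2) \<le> sqrt 1" by (intro real_sqrt_le_mono) simp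
    then show ?thesis by (simp add: cg_def)
  qed
  have ne: "cmod e = 1" using cgs by (simp add: e_def cmod_def)
  have np: "cmod p = 1" by (simp add: p_def)
  have nq: "cmod q = 1" by (simp add: q_def np)
  have PC: "P u = Complex (X u) (Y u) * cnj e" for u
    unfolding P_def X_def Y_def p_def using PX[of a u] by simp
  have ReP: "Re (P u) = X u * cg + Y u * s" for u by (simp add: PC e_def)
  have ImP: "Im (P u) = Y u * cg - X u * s" for u by (simp add: PC e_def)
  have nP: "cmod (P u) = cmod ((u - p) * (u - q))" for u
    unfolding P_def q_def p_def using normP[of a u] ne by (simp add: norm_mult)
  have nP2: "cmod (P u) = cmod (Complex (X u) (Y u))" for u
    by (simp add: PC norm_mult ne)
  have rr: "Re u ^ 2 + Im u ^ 2 = cmod u ^ 2" for u by (simp add: cmod_power2)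
  have wPe: "w u * cnj e = P u / of_real (cmod (u - q) ^ 2)" if "u \<noteq> q" for u
    unfolding w_def P_def q_def p_def using wP[of u a e] that by (simp add: q_def p_def)
  have P0: "P u = 0 \<longleftrightarrow> u = p \<or> u = q" for u
    using nP[of u] by auto
  have wne: "w u * cnj e \<noteq> 0" if "u \<noteq> p" "u \<noteq> q" for u
    using wPe[of u] that P0[of u] by simp
  have ImL: "Im (L u) \<le> pi" if "u \<noteq> p" "u \<noteq> q" for u
    unfolding L_def using Im_Ln_le_pi wne that by blast
  have nF: "cmod (F u) = cmod (f u) * cmod ((u - p) * (u - q)) * exp (\<mu> * Im (L u))" for u
    by (simp add: F_def norm_mult)
  have K0: "0 \<le> K"
  proof -
    have "cmod (f 0) \<le> K" using Kb[of 0] by simp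
    then show ?thesis using norm_ge_zero[of "f 0"] by linarith
  qed
  have B0: "0 \<le> B" using K0 by (simp add: B_def)
  have notcut: "w u * cnj e \<notin> \<real>\<^sub>\<le>\<^sub>0" if "cmod u \<le> 1" "0 \<le> Im (P u)" "u \<noteq> p" "u \<noteq> q" for u
  proof
    assume c: "w u * cnj e \<in> \<real>\<^sub>\<le>\<^sub>0"
    define r where "r = cmod (u - q) ^ 2"
    have r0: "0 < r" using that by (simp add: r_def)
    have eq: "P u = of_real r * (w u * cnj e)" using wPe[of u] that r0 by (simp add: r_def)
    have "Im (w u * cnj e) = 0" "Re (w u * cnj e) \<le> 0" using c by (auto simp: complex_nonpos_Reals_iff)
    then have i0: "Im (P u) = 0" and r0': "Re (P u) \<le> 0" using eq r0
      by (auto simp: mult_nonneg_nonpos)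
    have "cmod u ^ 2 \<le> 1" using that(1) by (simp add: power_le_one)
    then have Y0: "0 \<le> Y u" unfolding Y_def using sa rr[of u] by simp
    have "Y u * cg = X u * s" using i0 ImP[of u] by simp
    moreover have "0 \<le> Y u * cg" using Y0 cg1 by simp
    ultimately have "0 \<le> X u * s" by simp
    then have X0: "0 \<le> X u" using s0 by (simp add: zero_le_mult_iff)
    have "X u * cg + Y u * s \<le> 0" using r0' ReP[of u] by simp
    moreover have "0 \<le> X u * cg" "0 \<le> Y u * s" using X0 Y0 s0 cg1 by simp_all
    ultimately have "X u * cg = 0" "Y u * s = 0" by linarith+
    then have "X u = 0" "Y u = 0" using s0 cg1 by simp_all
    then have "P u = 0" by (simp add: PC complex_eq_iff)
    then show False using P0 that by auto
  qed
  have pq: "u \<noteq> p \<and> u \<noteq> q" if "cmod u < 1" for u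
    using that np nq by auto
  have Sopen: "open S"
    unfolding S_def P_def by (intro open_Collect_conj open_Collect_less continuous_intros)
  have Sb: "bounded S"
    by (rule bounded_subset[OF bounded_ball[of 0 1]]) (auto simp: S_def)
  have clS: "closure S \<subseteq> {u. cmod u \<le> 1 \<and> 0 \<le> Im (P u)}"
  proof (rule closure_minimal)
    show "S \<subseteq> {u. cmod u \<le> 1 \<and> 0 \<le> Im (P u)}" by (auto simp: S_def)
    show "closed {u. cmod u \<le> 1 \<and> 0 \<le> Im (P u)}"
      unfolding P_def by (intro closed_Collect_conj closed_Collect_le continuous_intros)
  qed
  have fcont: "isCont f x" for x
  proof -
    have "continuous_on UNIV f" using holf by (rule holomorphic_on_imp_continuous_on)
    then show ?thesis by (simp add: continuous_on_eq_continuous_at)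
  qed
  have Fhol: "F holomorphic_on S"
  proof -
    have h1: "u - q \<noteq> 0" if "u \<in> S" for u using pq[of u] that by (auto simp: S_def)
    have h2: "w u * cnj e \<notin> \<real>\<^sub>\<le>\<^sub>0" if "u \<in> S" for u
      using notcut[of u] pq[of u] that by (auto simp: S_def)
    have "(\<lambda>u. w u * cnj e) holomorphic_on S" unfolding w_def
      using h1 by (intro holomorphic_intros) auto
    then have "(\<lambda>u. Ln (w u * cnj e)) holomorphic_on S"
      using h2 by (intro holomorphic_on_Ln') auto
    then have hL: "L holomorphic_on S" unfolding L_def .
    have hf: "f holomorphic_on S" using holomorphic_on_subset[OF holf, of S] by simp
    show ?thesis unfolding F_def
      by (intro holomorphic_intros hL hf)
  qed
  have Ghol: "G holomorphic_on interior S"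
    unfolding interior_open[OF Sopen]
    by (rule holomorphic_transform[OF Fhol]) (use pq in \<open>auto simp: G_def S_def\<close>)
  have Gcont: "continuous_on (closure S) G"
    unfolding continuous_on_eq_continuous_within
  proof
    fix x assume x: "x \<in> closure S"
    then have xc: "cmod x \<le> 1" "0 \<le> Im (P x)" using clS by auto
    show "continuous (at x within closure S) G"
    proof (cases "x = p \<or> x = q")
      case True
      have Gx: "G x = 0" using True by (simp add: G_def)
      have bound: "cmod (G y) \<le> cmod (f y * ((y - p) * (y - q))) * exp (\<mu> * pi)" for y
      proof (cases "y = p \<or> y = q")
        case True then show ?thesis by (simp add: G_def)
      next
        case False
        then have "cmod (G y) = cmod (f y) * cmod ((y - p) * (y - q)) * exp (\<mu> * Im (L y))"
          by (simp add: G_def nF)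
        also have "\<dots> \<le> cmod (f y) * cmod ((y - p) * (y - q)) * exp (\<mu> * pi)"
          using ImL[of y] False mu by (intro mult_left_mono) (auto intro: mult_left_mono)
        finally show ?thesis by (simp add: norm_mult)
      qed
      have "isCont (\<lambda>y. cmod (f y * ((y - p) * (y - q))) * exp (\<mu> * pi)) x"
        using fcont[of x] by (intro continuous_intros) auto
      then have "continuous (at x within closure S) (\<lambda>y. cmod (f y * ((y - p) * (y - q))) * exp (\<mu> * pi))"
        by (rule continuous_at_imp_continuous_within)
      then have "((\<lambda>y. cmod (f y * ((y - p) * (y - q))) * exp (\<mu> * pi)) \<longlongrightarrow> cmod (f x * ((x - p) * (x - q))) * exp (\<mu> * pi)) (at x within closure S)"
        by (simp add: continuous_within)
      moreover have "cmod (f x * ((x - p) * (x - q))) * exp (\<mu> * pi) = 0" using True by auto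
      ultimately have "((\<lambda>y. cmod (f y * ((y - p) * (y - q))) * exp (\<mu> * pi)) \<longlongrightarrow> 0) (at x within closure S)"
        by simp
      then have "(G \<longlongrightarrow> 0) (at x within closure S)"
        by (rule Lim_null_comparison[rotated]) (simp add: bound)
      then show ?thesis by (simp add: continuous_within Gx)
    next
      case False
      have nc: "w x * cnj e \<notin> \<real>\<^sub>\<le>\<^sub>0" using notcut xc False by auto
      have xq: "x - q \<noteq> 0" using False by simp
      have "isCont F x" unfolding F_def L_def w_def
        using fcont[of x] nc xq unfolding w_def by (intro continuous_intros) auto
      moreover have "eventually (\<lambda>y. F y = G y) (nhds x)"
      proof -
        have "open (- {p, q})" by (intro open_Compl) simp
        then have "eventually (\<lambda>y. y \<in> - {p, q}) (nhds x)"
          using False by (intro eventually_nhds_in_open) auto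
        then show ?thesis by eventually_elim (auto simp: G_def)
      qed
      ultimately have "isCont G x" using isCont_cong by blast
      then show ?thesis by (rule continuous_at_imp_continuous_within)
    qed
  qed
  have fr: "cmod (G z) \<le> B" if z: "z \<in> frontier S" for z
  proof -
    have zc: "z \<in> closure S" "z \<notin> S" using z Sopen by (auto simp: frontier_def interior_open)
    then have z1: "cmod z \<le> 1" "0 \<le> Im (P z)" using clS by auto
    show ?thesis
    proof (cases "z = p \<or> z = q")
      case True then show ?thesis using B0 by (simp add: G_def)
    next
      case False
      have Gz: "cmod (G z) = cmod (f z) * cmod ((z - p) * (z - q)) * exp (\<mu> * Im (L z))"
        using False by (simp add: G_def nF)
      show ?thesis
      proof (cases "cmod z = 1")
        case True
        have Yz: "Y z = 0" using True rr[of z] by (simp add: Y_def)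
        have "X z * s \<le> 0" using z1(2) ImP[of z] Yz by simp
        then have "X z \<le> 0" using s0 by (simp add: mult_le_0_iff)
        then have "cos a \<le> Re z" using True rr[of z] by (simp add: X_def)
        then have fz: "cmod (f z) \<le> m" using mb True by blast
        have d1: "cmod (z - p) \<le> 2" using norm_triangle_ineq4[of z p] True np by simp
        have d2: "cmod (z - q) \<le> 2" using norm_triangle_ineq4[of z q] True nq by simp
        have d: "cmod ((z - p) * (z - q)) \<le> 4"
          using mult_mono[OF d1 d2] by (simp add: norm_mult)
        have ex: "exp (\<mu> * Im (L z)) \<le> exp (\<mu> * pi)"
          using ImL[of z] False mu by (simp add: mult_left_mono)
        have m0: "0 \<le> m" using fz norm_ge_zero[of "f z"] by linarith
        have "cmod (G z) \<le> m * 4 * exp (\<mu> * pi)"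
          unfolding Gz by (intro mult_mono fz d ex) (use m0 in auto)
        then show ?thesis by (simp add: B_def mult.commute mult.left_commute)
      next
        case False
        then have zl: "cmod z < 1" using z1 by simp
        then have iP: "Im (P z) = 0" using zc(2) z1(2) by (auto simp: S_def)
        have zz: "cmod z ^ 2 < 1" using zl by (simp add: power_less_one_iff abs_less_iff)
        have Ypos: "0 < Y z" unfolding Y_def using sa rr[of z] zz by simp
        have e1: "1 - Re z ^ 2 - Im z ^ 2 = 1 - cmod z ^ 2" using rr[of z] by simp
        have Yle: "Y z \<le> 1 - cmod z ^ 2" unfolding Y_def e1 using sa1 sa zz
          by (intro mult_left_le_one_le) auto
        have YX: "Y z * cg = X z * s" using iP ImP[of z] by simp
        have "0 \<le> Y z * cg" using Ypos cg1 by simp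
        then have "0 \<le> X z * s" using YX by simp
        then have X0: "0 \<le> X z" using s0 by (simp add: zero_le_mult_iff)
        have rP: "0 < Re (P z)" unfolding ReP using X0 Ypos s0 cg1 by (simp add: add_nonneg_pos)
        define r where "r = cmod (z - q) ^ 2"
        have r0: "0 < r" using False \<open>\<not> (z = p \<or> z = q)\<close> by (simp add: r_def)
        have wz: "w z * cnj e = P z / of_real r" using wPe[of z] \<open>\<not> (z = p \<or> z = q)\<close> by (simp add: r_def)
        have "Im (L z) = 0" unfolding L_def wz
          using iP rP r0 by (subst Im_Ln_eq_0) (auto simp: Re_divide_of_real Im_divide_of_real)
        then have Gz': "cmod (G z) = cmod (f z) * cmod ((z - p) * (z - q))" using Gz by simp
        have "Y z * cg \<le> Y z * 1" using Ypos cgle by (intro mult_left_mono) auto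
        then have "X z * s \<le> Y z" using YX by simp
        then have "X z \<le> Y z / s" using s0 by (simp add: field_simps)
        also have "Y z / s = 8 * (1 - cmod z ^ 2)" unfolding Y_def e1 s_def using sa by (simp add: field_simps)
        finally have Xle: "X z \<le> 8 * (1 - cmod z ^ 2)" .
        have "cmod ((z - p) * (z - q)) = cmod (Complex (X z) (Y z))" using nP[of z] nP2[of z] by simp
        also have "\<dots> \<le> \<bar>X z\<bar> + \<bar>Y z\<bar>" using cmod_le[of "Complex (X z) (Y z)"] by simp
        also have "\<dots> \<le> 9 * (1 - cmod z ^ 2)" using X0 Ypos Xle Yle by simp
        also have "\<dots> \<le> 18 * (1 - cmod z)"
        proof -
          have "1 - cmod z ^ 2 = (1 - cmod z) * (1 + cmod z)" by (simp add: power2_eq_square algebra_simps)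
          also have "\<dots> \<le> (1 - cmod z) * 2" using zl z1 by (intro mult_left_mono) auto
          finally show ?thesis by simp
        qed
        finally have d: "cmod ((z - p) * (z - q)) \<le> 18 * (1 - cmod z)" .
        have "cmod (G z) \<le> cmod (f z) * (18 * (1 - cmod z))"
          unfolding Gz' by (intro mult_left_mono d) simp
        also have "\<dots> = 18 * (cmod (f z) * (1 - cmod z))" by simp
        also have "\<dots> \<le> 18 * K" using Kb[OF zl] by simp
        finally show ?thesis by (simp add: B_def)
      qed
    qed
  qed
  have u0r: "Re u0 ^ 2 + Im u0 ^ 2 \<le> 1/4"
  proof -
    have "cmod u0 ^ 2 \<le> (1/2)^2" using u0 by (intro power_mono) auto
    moreover have "(1/2::real)^2 = 1/4" by (simp add: power2_eq_square)
    ultimately show ?thesis using rr[of u0] by linarith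
  qed
  have h34: "3/4 \<le> 1 - Re u0 ^ 2 - Im u0 ^ 2" using u0r by linarith
  have hsq: "0 \<le> Re u0 ^ 2 + Im u0 ^ 2" by (intro add_nonneg_nonneg zero_le_power2)
  have Yu0: "3/4 * sin a \<le> Y u0" "Y u0 \<le> 1"
  proof -
    have "sin a * (3/4) \<le> sin a * (1 - Re u0 ^ 2 - Im u0 ^ 2)"
      by (rule mult_left_mono[OF h34]) (use sa in linarith)
    moreover have "3/4 * sin a = sin a * (3/4)" by (rule mult.commute)
    ultimately show "3/4 * sin a \<le> Y u0" unfolding Y_def by linarith
    show "Y u0 \<le> 1" unfolding Y_def
      by (intro mult_le_one) (use sa1 h34 hsq in linarith)+
  qed
  have Xu0: "\<bar>X u0\<bar> \<le> 9/4"
  proof -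
    have c1: "\<bar>cos a\<bar> \<le> 1" by simp
    have re: "\<bar>Re u0\<bar> \<le> 1/2" using abs_Re_le_cmod[of u0] u0 by linarith
    have A0: "0 \<le> Re u0 ^ 2 + Im u0 ^ 2 + 1" using hsq by linarith
    have "\<bar>(Re u0 ^ 2 + Im u0 ^ 2 + 1) * cos a\<bar> = (Re u0 ^ 2 + Im u0 ^ 2 + 1) * \<bar>cos a\<bar>"
      by (simp only: abs_mult abs_of_nonneg[OF A0])
    also have "\<dots> \<le> (5/4) * 1"
      by (intro mult_mono) (use u0r c1 A0 in linarith)+
    finally have "\<bar>(Re u0 ^ 2 + Im u0 ^ 2 + 1) * cos a\<bar> \<le> 5/4" by linarith
    then show ?thesis unfolding X_def using re by linarith
  qed
  have Ypos0: "0 < Y u0" using Yu0 sa by linarith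
  have ImP0: "sin a / 4 \<le> Im (P u0)"
  proof -
    have f1: "3/4 * sin a * (99/100) \<le> Y u0 * cg"
      by (intro mult_mono) (use Yu0 cg1 sa Ypos0 in linarith)+
    have "X u0 \<le> 9/4" using Xu0 by linarith
    then have f2: "X u0 * s \<le> 9/4 * s"
      by (rule mult_right_mono) (use s0 in linarith)
    show ?thesis unfolding ImP using f1 f2 sa s_def by linarith
  qed
  have nP0: "cmod (P u0) \<le> 13/4"
  proof -
    have "cmod (Complex (X u0) (Y u0)) \<le> \<bar>X u0\<bar> + \<bar>Y u0\<bar>"
      using cmod_le[of "Complex (X u0) (Y u0)"] by (simp only: complex.sel)
    moreover have "\<bar>Y u0\<bar> = Y u0" using Ypos0 by (simp only: abs_of_pos)
    ultimately show ?thesis using nP2[of u0] Xu0 Yu0 by linarith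
  qed
  have ImP0pos: "0 < Im (P u0)" using ImP0 sa by linarith
  have u0S: "u0 \<in> S" unfolding S_def using u0 ImP0pos by simp
  have u0pq: "u0 \<noteq> p" "u0 \<noteq> q" using pq[of u0] u0 by auto
  have ImL0: "sin a / 16 \<le> Im (L u0)"
  proof -
    define r where "r = cmod (u0 - q) ^ 2"
    have r0: "0 < r" using u0pq by (simp add: r_def)
    have wz: "w u0 * cnj e = P u0 / of_real r" using wPe[of u0] u0pq by (simp add: r_def)
    have Pne: "P u0 \<noteq> 0" using P0 u0pq by auto
    have ip: "0 < Im (P u0 / of_real r)" unfolding Im_divide_of_real
      using ImP0pos r0 by (rule divide_pos_pos)
    have "Im (P u0 / of_real r) / cmod (P u0 / of_real r) = Im (P u0) / cmod (P u0)"
      using r0 by (simp add: Im_divide_of_real norm_divide)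
    also have "(sin a / 4) / (13/4) \<le> Im (P u0) / cmod (P u0)"
      by (rule frac_le) (use ImP0 ImP0pos nP0 Pne in auto)
    finally have "(sin a / 4) / (13/4) \<le> Im (L u0)"
      unfolding L_def wz using Im_Ln_ge[OF ip] by linarith
    moreover have "(sin a / 4) / (13/4) = sin a / 13" by simp
    ultimately have "sin a / 13 \<le> Im (L u0)" by simp
    moreover have "sin a / 16 \<le> sin a / 13" by (rule divide_left_mono) (use sa in auto)
    ultimately show ?thesis by (rule order_trans[rotated])
  qed
  have dd: "1/4 \<le> cmod ((u0 - p) * (u0 - q))"
  proof -
    have "1/2 \<le> cmod (u0 - p)" using norm_triangle_ineq2[of p u0] np u0 norm_minus_commute[of p u0] by linarith
    moreover have "1/2 \<le> cmod (u0 - q)" using norm_triangle_ineq2[of q u0] nq u0 norm_minus_commute[of q u0] by linarith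
    ultimately have "1/2 * (1/2) \<le> cmod (u0 - p) * cmod (u0 - q)"
      by (intro mult_mono) linarith+
    then show ?thesis by (simp only: norm_mult)
  qed
  have "cmod (f u0) / 4 * exp (\<mu> * (sin a / 16)) \<le> cmod (G u0)"
  proof -
    have G0: "cmod (G u0) = cmod (f u0) * cmod ((u0 - p) * (u0 - q)) * exp (\<mu> * Im (L u0))"
      using u0pq by (simp add: G_def nF)
    have m1: "cmod (f u0) * (1/4) \<le> cmod (f u0) * cmod ((u0 - p) * (u0 - q))"
      by (rule mult_left_mono[OF dd]) simp
    have m2: "exp (\<mu> * (sin a / 16)) \<le> exp (\<mu> * Im (L u0))"
      using mult_left_mono[OF ImL0 mu] by simp
    have "cmod (f u0) / 4 * exp (\<mu> * (sin a / 16)) = cmod (f u0) * (1/4) * exp (\<mu> * (sin a / 16))"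
      by simp
    also have "\<dots> \<le> cmod (f u0) * cmod ((u0 - p) * (u0 - q)) * exp (\<mu> * Im (L u0))"
      by (rule mult_mono[OF m1 m2]) simp_all
    also have "\<dots> = cmod (G u0)" using G0 by simp
    finally show ?thesis .
  qed
  also have "cmod (G u0) \<le> B"
    by (rule maximum_modulus_frontier[OF Ghol Gcont Sb fr u0S])
  finally show ?thesis unfolding B_def .
qed

lemma core2:
  fixes f :: "complex \<Rightarrow> complex" and a K :: real and u0 :: complex
  assumes holf: "f holomorphic_on UNIV"
    and a: "0 < a" "a < pi"
    and Kb: "\<And>u. cmod u < 1 \<Longrightarrow> cmod (f u) * (1 - cmod u) \<le> K"
    and u0: "cmod u0 \<le> 1/2" and nz: "f u0 \<noteq> 0"
  shows "\<exists>u. cmod u = 1 \<and> cos a \<le> Re u \<and>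
           2 * K * exp (- (16 * pi / sin a) * ln (72 * K / cmod (f u0))) \<le> cmod (f u)"
proof (rule ccontr)
  assume H: "\<not> ?thesis"
  define c where "c = 16 * pi / sin a"
  define Lz where "Lz = ln (72 * K / cmod (f u0))"
  define m where "m = 2 * K * exp (- c * Lz)"
  have sa: "0 < sin a" using sin_gt_zero a by blast
  have c0: "0 < c" using sa by (simp add: c_def)
  have fpos: "0 < cmod (f u0)" using nz by simp
  have u01: "cmod u0 < 1" using u0 by linarith
  have "cmod (f u0) * (1/2) \<le> cmod (f u0) * (1 - cmod u0)"
    by (rule mult_left_mono) (use u0 in linarith, simp)
  then have f2K: "cmod (f u0) \<le> 2 * K" using Kb[OF u01] by linarith
  have K0: "0 < K" using f2K fpos by linarith
  have "36 \<le> 72 * K / cmod (f u0)" using f2K fpos K0 by (simp add: field_simps)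
  then have Lz0: "0 < Lz" unfolding Lz_def by (intro ln_gt_zero) linarith
  have m0: "0 < m" using K0 by (simp add: m_def)
  have "exp (- c * Lz) \<le> 1" using c0 Lz0 by simp
  then have m2K: "m \<le> 2 * K" unfolding m_def using K0 by (simp add: mult_left_le)
  have mb: "cmod (f u) \<le> m" if "cmod u = 1" "cos a \<le> Re u" for u
    using H that by (auto simp: m_def c_def Lz_def not_le)
  define \<mu> where "\<mu> = ln (18 * K / (4 * m)) / pi"
  have r1: "18 * K / (4 * m) = (9/4) * exp (c * Lz)"
    unfolding m_def using K0 by (simp add: field_simps exp_minus)
  have lnr: "ln (18 * K / (4 * m)) = ln (9/4) + c * Lz"
  proof -
    have "ln ((9/4) * exp (c * Lz)) = ln (9/4) + ln (exp (c * Lz))" by (rule ln_mult_pos) simp_all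
    then show ?thesis unfolding r1 by (simp only: ln_exp)
  qed
  have mu0: "0 \<le> \<mu>" unfolding \<mu>_def lnr using c0 Lz0 by simp
  have e1: "4 * m * exp (\<mu> * pi) = 18 * K"
  proof -
    have "\<mu> * pi = ln (18 * K / (4 * m))" by (simp add: \<mu>_def)
    moreover have "0 < 18 * K / (4 * m)" using K0 m0 by simp
    ultimately have "exp (\<mu> * pi) = 18 * K / (4 * m)" by simp
    then show ?thesis using m0 by simp
  qed
  have "cmod (f u0) / 4 * exp (\<mu> * (sin a / 16)) \<le> max (4 * m * exp (\<mu> * pi)) (18 * K)"
    by (rule core[OF holf a Kb mb u0 mu0])
  then have "cmod (f u0) / 4 * exp (\<mu> * (sin a / 16)) \<le> 18 * K" unfolding e1 by simp
  then have "exp (\<mu> * (sin a / 16)) \<le> 72 * K / cmod (f u0)" using fpos by (simp add: field_simps)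
  then have "\<mu> * (sin a / 16) \<le> Lz" unfolding Lz_def
    using fpos K0 by (subst exp_le_cancel_iff[symmetric]) simp
  moreover have "\<mu> * (sin a / 16) = ln (9/4) * sin a / (16 * pi) + Lz"
    unfolding \<mu>_def lnr c_def using sa by (simp add: field_simps)
  moreover have "0 < ln (9/4) * sin a / (16 * pi)" using sa by simp
  ultimately show False by linarith
qed


lemma cos_lb: fixes x :: real assumes "0 \<le> x" shows "1 - x^2/2 \<le> cos x"
proof -
  have "(\<lambda>t. cos t - 1 + t^2/2) 0 \<le> (\<lambda>t. cos t - 1 + t^2/2) x"
  proof (rule DERIV_nonneg_imp_nondecreasing[OF assms])
    fix y :: real assume y: "0 \<le> y" "y \<le> x"
    have "DERIV (\<lambda>t. cos t - 1 + t^2/2) y :> (- sin y + y)"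
      by (auto intro!: derivative_eq_intros)
    moreover have "0 \<le> - sin y + y" using sin_x_le_x[OF y(1)] by linarith
    ultimately show "\<exists>d. DERIV (\<lambda>t. cos t - 1 + t^2/2) y :> d \<and> 0 \<le> d" by blast
  qed
  then show ?thesis by simp
qed

lemma sin_lb3: fixes x :: real assumes "0 \<le> x" shows "x - x^3/6 \<le> sin x"
proof -
  have "(\<lambda>t. sin t - t + t^3/6) 0 \<le> (\<lambda>t. sin t - t + t^3/6) x"
  proof (rule DERIV_nonneg_imp_nondecreasing[OF assms])
    fix y :: real assume y: "0 \<le> y" "y \<le> x"
    have "DERIV (\<lambda>t. sin t - t + t^3/6) y :> (cos y - 1 + y^2/2)"
      by (auto intro!: derivative_eq_intros simp: power2_eq_square)
    moreover have "0 \<le> cos y - 1 + y^2/2" using cos_lb[OF y(1)] by linarith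
    ultimately show "\<exists>d. DERIV (\<lambda>t. sin t - t + t^3/6) y :> d \<and> 0 \<le> d" by blast
  qed
  then show ?thesis by simp
qed

lemma sin_lin: fixes x :: real assumes "0 \<le> x" "x \<le> 2" shows "x / 3 \<le> sin x"
proof -
  have "x^2 \<le> 2^2" using assms by (intro power_mono) auto
  then have "x * x^2 \<le> x * 4" using assms by (intro mult_left_mono) auto
  moreover have "x^3 = x * x^2" by (simp add: power3_eq_cube power2_eq_square)
  ultimately have "x^3 \<le> 4 * x" by linarith
  then show ?thesis using sin_lb3[OF assms(1)] by linarith
qed

lemma poly_bound:
  fixes Q :: "complex poly" and M :: real and z :: complex
  assumes cf: "\<And>j. cmod (coeff Q j) \<le> M" and z: "cmod z < 1"
  shows "cmod (poly Q z) * (1 - cmod z) \<le> M"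
proof -
  define n where "n = degree Q"
  have M0: "0 \<le> M" using cf[of 0] norm_ge_zero[of "coeff Q 0"] by linarith
  have "cmod (poly Q z) \<le> (\<Sum>i\<le>n. cmod (coeff Q i * z ^ i))"
    unfolding poly_altdef n_def by (rule norm_sum)
  also have "\<dots> \<le> (\<Sum>i\<le>n. M * cmod z ^ i)"
    by (intro sum_mono) (simp add: norm_mult norm_power mult_right_mono cf)
  also have "\<dots> = M * (\<Sum>i\<le>n. cmod z ^ i)" by (simp add: sum_distrib_left)
  finally have h: "cmod (poly Q z) \<le> M * (\<Sum>i\<le>n. cmod z ^ i)" .
  have z1: "0 \<le> 1 - cmod z" using z by linarith
  have "cmod (poly Q z) * (1 - cmod z) \<le> M * (\<Sum>i\<le>n. cmod z ^ i) * (1 - cmod z)"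
    by (rule mult_right_mono[OF h z1])
  also have "\<dots> = M * ((1 - cmod z) * (\<Sum>i\<le>n. cmod z ^ i))" by (simp only: ac_simps)
  also have "(1 - cmod z) * (\<Sum>i\<le>n. cmod z ^ i) = 1 - cmod z ^ Suc n" by (rule sum_gp_basic)
  also have "M * (1 - cmod z ^ Suc n) \<le> M * 1"
    by (rule mult_left_mono[OF _ M0]) simp
  finally show ?thesis by simp
qed

lemma ln2_ge: "1/2 \<le> ln (2::real)"
proof -
  have "ln (1 - 1/2) \<le> - (1/2::real)" by (rule ln_one_minus_pos_upper_bound) auto
  moreover have "ln (1 - 1/2::real) = - ln 2"
    using ln_inverse[of "2::real"] by (simp add: inverse_eq_divide)
  ultimately show ?thesis by linarith
qed

lemma arc_mem:
  fixes u :: complex and th :: real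
  assumes u: "cmod u = 1" "cos (th/2) \<le> Re u" and th: "0 < th" "th < pi"
  shows "\<exists>t. u = cis t \<and> - th/2 \<le> t \<and> t \<le> th/2"
proof -
  define t where "t = Arg u"
  have u0: "u \<noteq> 0" using u by auto
  have ut: "u = cis t" using cis_Arg[OF u0] u by (simp add: t_def sgn_div_norm)
  have tb: "- pi < t" "t \<le> pi" using Arg_bounded[of u] by (auto simp: t_def)
  have "Re u = cos t" using ut by simp
  then have "cos (th/2) \<le> cos \<bar>t\<bar>" using u(2) by simp
  then have "\<bar>t\<bar> \<le> th/2"
    using cos_mono_le_eq[of "th/2" "\<bar>t\<bar>"] th tb by auto
  then show ?thesis using ut by (intro exI[of _ t]) auto
qed

lemma stepA:
  fixes Q :: "complex poly" and M nu :: real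
  assumes c0: "cmod (coeff Q 0) = 1" and cf: "\<And>j. cmod (coeff Q j) \<le> M"
    and nu0: "0 < nu" and nu1: "nu \<le> 1"
  shows "\<exists>z0. cmod (z0 - of_real (1 - nu)) \<le> nu/2 \<and> 0 < cmod (poly Q z0) \<and>
               - ln (cmod (poly Q z0)) \<le> 3500 * ln (2 * M) / nu"
proof -
  have M1: "1 \<le> M" using cf[of 0] c0 by simp
  define Lam where "Lam = ln (2 * M)"
  have Lam2: "ln 2 \<le> Lam" unfolding Lam_def using M1 by simp
  have Lam0: "0 \<le> Lam" using Lam2 ln2_ge by linarith
  show ?thesis
  proof (cases "3/4 < nu")
    case True
    have "cmod (0 - complex_of_real (1 - nu)) = \<bar>1 - nu\<bar>"
      by (simp only: diff_0 norm_minus_cancel norm_of_real)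
    then have "cmod (0 - complex_of_real (1 - nu)) = 1 - nu" using nu1 by simp
    moreover have "0 \<le> 3500 * ln (2 * M) / nu" using Lam0 nu0 by (simp add: Lam_def)
    ultimately show ?thesis using True c0
      by (intro exI[of _ 0]) (simp add: poly_0_coeff_0)
  next
    case False
    then have nu34: "nu \<le> 3/4" by simp
    define \<rho> where "\<rho> = 1 - nu"
    have rho: "1/4 \<le> \<rho>" "\<rho> < 1" using nu34 nu0 by (auto simp: \<rho>_def)
    define f1 where "f1 u = poly Q (of_real \<rho> * u)" for u
    have holf1: "f1 holomorphic_on UNIV" unfolding f1_def by (intro holomorphic_intros)
    have Kb1: "cmod (f1 u) * (1 - cmod u) \<le> 4 * M" if u: "cmod u < 1" for u
    proof -
      define z where "z = of_real \<rho> * u"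
      have nz: "cmod z = \<rho> * cmod u" using rho by (simp add: z_def norm_mult)
      have "\<rho> * cmod u \<le> 1 * cmod u" using rho by (intro mult_right_mono) auto
      then have rz: "cmod z \<le> cmod u" using nz by simp
      then have z1: "cmod z < 1" using u by linarith
      have pb: "cmod (poly Q z) * (1 - cmod z) \<le> M" by (rule poly_bound[OF cf z1])
      have "4 * (1 - cmod z) = 4 - 4 * cmod z" by simp
      then have "1 - cmod u \<le> 4 * (1 - cmod z)" using rz u by linarith
      then have "cmod (f1 u) * (1 - cmod u) \<le> cmod (f1 u) * (4 * (1 - cmod z))"
        by (rule mult_left_mono) simp
      also have "\<dots> = 4 * (cmod (poly Q z) * (1 - cmod z))" by (simp add: f1_def z_def)
      also have "\<dots> \<le> 4 * M" using pb by simp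
      finally show ?thesis .
    qed
    have f10: "cmod (f1 0) = 1" using c0 by (simp add: f1_def poly_0_coeff_0)
    have f10': "f1 0 \<noteq> 0" using f10 by auto
    have a1: "0 < nu/2" "nu/2 < pi" using nu0 nu1 pi_ge_two by auto
    obtain u1 where u1: "cmod u1 = 1" "cos (nu/2) \<le> Re u1"
      and lb1: "2 * (4 * M) * exp (- (16 * pi / sin (nu/2)) * ln (72 * (4 * M) / cmod (f1 0))) \<le> cmod (f1 u1)"
      using core2[OF holf1 a1 Kb1, of 0] f10 f10' by auto
    define c1 where "c1 = 16 * pi / sin (nu/2)"
    define L1 where "L1 = ln (288 * M)"
    define B1 where "B1 = 8 * M * exp (- c1 * L1)"
    have lb: "B1 \<le> cmod (poly Q (of_real \<rho> * u1))"
      using lb1 f10 by (simp add: B1_def c1_def L1_def f1_def)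
    have B1pos: "0 < B1" using M1 by (simp add: B1_def)
    define z0 where "z0 = of_real \<rho> * u1"
    have dist: "cmod (z0 - of_real (1 - nu)) \<le> nu/2"
    proof -
      have e: "z0 - of_real (1 - nu) = of_real \<rho> * (u1 - 1)" by (simp add: z0_def \<rho>_def algebra_simps)
      have "cmod (u1 - 1) ^ 2 = (Re u1 - 1)^2 + Im u1 ^ 2" by (simp add: cmod_power2)
      also have "\<dots> = (Re u1 ^ 2 + Im u1 ^ 2) - 2 * Re u1 + 1" by (simp add: power2_eq_square algebra_simps)
      also have "Re u1 ^ 2 + Im u1 ^ 2 = 1" using u1(1) cmod_power2[of u1] by simp
      finally have "cmod (u1 - 1) ^ 2 = 2 - 2 * Re u1" by simp
      also have "\<dots> \<le> 2 - 2 * cos (nu/2)" using u1(2) by simp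
      also have "\<dots> \<le> (nu/2)^2" using cos_lb[of "nu/2"] nu0 by simp
      finally have "cmod (u1 - 1) \<le> nu/2" by (rule power2_le_imp_le) (use nu0 in simp)
      moreover have "cmod (z0 - of_real (1 - nu)) \<le> cmod (u1 - 1)"
        unfolding e using rho by (simp add: norm_mult mult_left_le_one_le)
      ultimately show ?thesis by linarith
    qed
    have pos: "0 < cmod (poly Q z0)" unfolding z0_def using lb B1pos by linarith
    have "ln B1 = ln (8 * M) + ln (exp (- c1 * L1))" unfolding B1_def
      by (rule ln_mult_pos) (use M1 in simp_all)
    then have lnB1: "ln B1 = ln (8 * M) - c1 * L1" by simp
    have "ln B1 \<le> ln (cmod (poly Q z0))" using lb B1pos pos unfolding z0_def
      by (subst ln_le_cancel_iff) auto
    moreover have "0 \<le> ln (8 * M)" using M1 by simp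
    ultimately have m1: "- ln (cmod (poly Q z0)) \<le> c1 * L1" using lnB1 by linarith
    have sin1: "nu / 6 \<le> sin (nu/2)" using sin_lin[of "nu/2"] nu0 nu1 by simp
    have c1b: "c1 \<le> 96 * pi / nu"
    proof -
      have "16 * pi / sin (nu/2) \<le> 16 * pi / (nu / 6)"
        by (rule divide_left_mono[OF sin1]) (use nu0 sin1 in auto)
      then show ?thesis by (simp add: c1_def)
    qed
    have L1b: "L1 \<le> 9 * Lam"
    proof -
      have "L1 = ln 144 + Lam" unfolding L1_def Lam_def
        using ln_mult_pos[of 144 "2 * M"] M1 by simp
      moreover have "ln (144::real) \<le> ln (2 ^ 8)" by simp
      moreover have "ln (2 ^ 8 :: real) = 8 * ln 2" using ln_realpow[of 2 8] by simp
      ultimately show ?thesis using Lam2 by linarith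
    qed
    have L10: "0 \<le> L1" using M1 by (simp add: L1_def)
    have c10: "0 \<le> c1" using sin1 nu0 by (simp add: c1_def)
    have "c1 * L1 \<le> (96 * pi / nu) * (9 * Lam)"
      by (intro mult_mono c1b L1b L10) (use nu0 in simp)
    also have "\<dots> = 864 * pi * Lam / nu" by simp
    also have "\<dots> \<le> 3500 * Lam / nu"
    proof -
      have "864 * pi * Lam \<le> 3500 * Lam" using pi_less_4 Lam0 by (intro mult_right_mono) auto
      then show ?thesis using nu0 by (simp add: divide_right_mono)
    qed
    finally have "- ln (cmod (poly Q z0)) \<le> 3500 * Lam / nu" using m1 by linarith
    then show ?thesis using dist pos by (intro exI[of _ z0]) (simp add: Lam_def)
  qed
qed

theorem corollary5p8:
  shows "\<exists>C::real. C > 0 \<and>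
    (\<forall>(Q::complex poly) (M::real) (nu::real) (theta::real).
       norm (coeff Q 0) = 1 \<longrightarrow> (\<forall>j. norm (coeff Q j) \<le> M) \<longrightarrow>
       0 < nu \<longrightarrow> nu \<le> 1 \<longrightarrow> 0 < theta \<longrightarrow> theta < pi \<longrightarrow>
       (\<exists>w \<in> circ_arc nu theta. norm (poly Q w) \<ge> (2 * M) powr (- C / (nu * theta))))"
proof (intro exI[of _ "10^7"] conjI allI impI)
  show "(0::real) < 10^7" by simp
  fix Q :: "complex poly" and M nu theta :: real
  assume c0: "norm (coeff Q 0) = 1" and cfa: "\<forall>j. norm (coeff Q j) \<le> M"
    and nu0: "0 < nu" and nu1: "nu \<le> 1" and th0: "0 < theta" and thpi: "theta < pi"
  have cf: "\<And>j. cmod (coeff Q j) \<le> M" using cfa by simp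
  have M1: "1 \<le> M" using cf[of 0] c0 by simp
  define Lam where "Lam = ln (2 * M)"
  have Lam2: "ln 2 \<le> Lam" unfolding Lam_def using M1 by simp
  have Lam12: "1/2 \<le> Lam" using Lam2 ln2_ge by linarith
  obtain z0 where z0: "cmod (z0 - of_real (1 - nu)) \<le> nu/2" "0 < cmod (poly Q z0)"
    and z0b: "- ln (cmod (poly Q z0)) \<le> 3500 * Lam / nu"
    using stepA[OF c0 cf nu0 nu1] unfolding Lam_def by blast
  define c where "c = 1 - nu"
  have c0': "0 \<le> c" using nu1 by (simp add: c_def)
  define f2 where "f2 u = poly Q (of_real c + of_real nu * u)" for u
  have holf2: "f2 holomorphic_on UNIV" unfolding f2_def by (intro holomorphic_intros)
  have Kb2: "cmod (f2 u) * (1 - cmod u) \<le> M / nu" if u: "cmod u < 1" for u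
  proof -
    define z where "z = of_real c + of_real nu * u"
    have "cmod z \<le> cmod (complex_of_real c) + cmod (complex_of_real nu * u)"
      unfolding z_def by (rule norm_triangle_ineq)
    also have "\<dots> = c + nu * cmod u" using c0' nu0 by (simp add: norm_mult)
    finally have zb: "cmod z \<le> c + nu * cmod u" .
    have "nu * cmod u < nu * 1" using u nu0 by (intro mult_strict_left_mono) auto
    then have z1: "cmod z < 1" using zb by (simp add: c_def)
    have pb: "cmod (poly Q z) * (1 - cmod z) \<le> M" by (rule poly_bound[OF cf z1])
    have d: "nu * (1 - cmod u) \<le> 1 - cmod z" using zb by (simp add: c_def algebra_simps)
    have "cmod (f2 u) * (nu * (1 - cmod u)) \<le> cmod (f2 u) * (1 - cmod z)"
      by (rule mult_left_mono[OF d]) simp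
    also have "\<dots> \<le> M" using pb by (simp add: f2_def z_def)
    finally have "nu * (cmod (f2 u) * (1 - cmod u)) \<le> M" by (simp add: ac_simps)
    then show ?thesis using nu0 by (simp add: field_simps)
  qed
  define u0 where "u0 = (z0 - of_real c) / of_real nu"
  have u0b: "cmod u0 \<le> 1/2"
  proof -
    have "cmod u0 = cmod (z0 - of_real c) / nu" using nu0 by (simp add: u0_def norm_divide)
    also have "\<dots> \<le> (nu/2) / nu" using z0(1) nu0 by (intro divide_right_mono) (auto simp: c_def)
    also have "\<dots> = 1/2" using nu0 by simp
    finally show ?thesis .
  qed
  have f2u0: "f2 u0 = poly Q z0" using nu0 by (simp add: f2_def u0_def)
  have f2nz: "f2 u0 \<noteq> 0" using f2u0 z0(2) by auto
  have a2: "0 < theta/2" "theta/2 < pi" using th0 thpi by auto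
  obtain u2 where u2: "cmod u2 = 1" "cos (theta/2) \<le> Re u2"
    and lb2: "2 * (M / nu) * exp (- (16 * pi / sin (theta/2)) * ln (72 * (M / nu) / cmod (f2 u0))) \<le> cmod (f2 u2)"
    using core2[OF holf2 a2 Kb2 u0b f2nz] by blast
  define w where "w = of_real c + of_real nu * u2"
  obtain t where t: "u2 = cis t" "- theta/2 \<le> t" "t \<le> theta/2"
    using arc_mem[OF u2 th0 thpi] by blast
  have wA: "w \<in> circ_arc nu theta"
    unfolding circ_arc_def w_def c_def using t by auto
  define X where "X = cmod (poly Q z0)"
  have X0: "0 < X" using z0(2) by (simp add: X_def)
  define T where "T = ln (72 * (M / nu) / X)"
  define c2 where "c2 = 16 * pi / sin (theta/2)"
  have sin2: "theta / 6 \<le> sin (theta/2)" using sin_lin[of "theta/2"] th0 thpi pi_less_4 by simp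
  have c2b: "c2 \<le> 96 * pi / theta"
  proof -
    have "16 * pi / sin (theta/2) \<le> 16 * pi / (theta / 6)"
      by (rule divide_left_mono[OF sin2]) (use th0 sin2 in auto)
    then show ?thesis by (simp add: c2_def)
  qed
  have c20: "0 \<le> c2" using sin2 th0 by (simp add: c2_def)
  have Tb: "T \<le> 3509 * Lam / nu"
  proof -
    have "T = ln (36 * (2 * M) * (1 / nu)) - ln X"
      unfolding T_def using X0 M1 nu0 by (subst ln_divide_pos[symmetric]) (auto simp: field_simps)
    also have "ln (36 * (2 * M) * (1 / nu)) = ln 36 + Lam + ln (1 / nu)"
    proof -
      have "ln (36 * (2 * M) * (1 / nu)) = ln (36 * (2 * M)) + ln (1 / nu)"
        by (rule ln_mult_pos) (use M1 nu0 in auto)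
      moreover have "ln (36 * (2 * M)) = ln 36 + ln (2 * M)"
        by (rule ln_mult_pos) (use M1 in auto)
      ultimately show ?thesis unfolding Lam_def by simp
    qed
    finally have Te: "T = ln 36 + Lam + ln (1 / nu) - ln X" .
    have "ln (1 / nu) \<le> 1 / nu - 1" using nu0 by (intro ln_le_minus_one) simp
    moreover have "1 / nu \<le> 2 * Lam / nu" using Lam12 nu0 by (simp add: divide_right_mono)
    moreover have "ln (36::real) \<le> ln (2 ^ 6)" by simp
    moreover have "ln (2 ^ 6 :: real) = 6 * ln 2" using ln_realpow[of 2 6] by simp
    moreover have "7 * Lam \<le> 7 * Lam / nu"
    proof -
      have "7 * Lam * nu \<le> 7 * Lam * 1" using nu1 Lam12 by (intro mult_left_mono) auto
      then show ?thesis using nu0 by (simp add: field_simps)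
    qed
    moreover have "- ln X \<le> 3500 * Lam / nu" using z0b by (simp add: X_def)
    moreover have "7 * Lam / nu + 2 * Lam / nu + 3500 * Lam / nu = 3509 * Lam / nu" by (simp add: field_simps)
    ultimately show ?thesis using Te Lam2 by linarith
  qed
  have T'0: "0 \<le> 3509 * Lam / nu" using Lam12 nu0 by simp
  have "c2 * T \<le> c2 * (3509 * Lam / nu)" by (rule mult_left_mono[OF Tb c20])
  also have "\<dots> \<le> (96 * pi / theta) * (3509 * Lam / nu)" by (rule mult_right_mono[OF c2b T'0])
  also have "\<dots> = (96 * 3509) * pi * (Lam / (nu * theta))" by (simp add: field_simps)
  also have "\<dots> \<le> (96 * 3509) * 4 * (Lam / (nu * theta))"
    using pi_less_4 Lam12 nu0 th0 by (intro mult_right_mono mult_left_mono) auto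
  also have "\<dots> \<le> 10^7 * (Lam / (nu * theta))"
    using Lam12 nu0 th0 by (intro mult_right_mono) auto
  finally have ex: "c2 * T \<le> 10^7 * (Lam / (nu * theta))" .
  have "(2 * M) powr (- (10^7) / (nu * theta)) = exp (- (10^7 * (Lam / (nu * theta))))"
    using M1 by (simp add: powr_def Lam_def)
  also have "\<dots> \<le> exp (- c2 * T)" using ex by simp
  also have "\<dots> \<le> 2 * (M / nu) * exp (- c2 * T)"
  proof -
    have "1 \<le> 2 * (M / nu)" using M1 nu0 nu1 by (simp add: field_simps)
    then have "1 * exp (- c2 * T) \<le> 2 * (M / nu) * exp (- c2 * T)"
      by (rule mult_right_mono) simp
    then show ?thesis by simp
  qed
  also have "\<dots> \<le> cmod (f2 u2)" using lb2 f2u0 by (simp add: c2_def T_def X_def)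
  also have "f2 u2 = poly Q w" by (simp add: f2_def w_def)
  finally show "\<exists>w \<in> circ_arc nu theta. norm (poly Q w) \<ge> (2 * M) powr (- (10^7) / (nu * theta))"
    using wA by blast
qed


end
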